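(* Let $\sigma_{naive}$ be naive semantics. For every two argumentation frameworks $AF=(AR,Attacks)$, $AF'=(AR',Attacks')$ with $AF\preceq_N AF'$ and every $E\in\sigma_{naive}(AF)$, there exists $E'\in\sigma_{naive}(AF')$ with $E'\not\subseteq AR$ or $E'=E$.
   Context: An argumentation framework is a pair $(AR,Attacks)$ with $AR$ a finite set and $Attacks\subseteq AR\times AR$; $a$ attacks $b$ iff $(a,b)\in Attacks$. A set $S\subseteq AR$ is conflict-free iff no element of $S$ attacks an element of $S$. $\sigma_{naive}(AF)$ is the set of all $\subseteq$-maximal conflict-free subsets of $AR$. $AF\preceq_N AF'$ (normal expansion) iff $AR\subseteq AR'$, $Attacks\subseteq Attacks'$ and no $(a,b)\in Attacks'\setminus Attacks$ has both $a,b\in AR$. *)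

theory Defs
  imports Main
begin

type_synonym 'a af = "'a set \<times> ('a \<times> 'a) set"

definition is_af :: "'a af \<Rightarrow> bool" where
  "is_af AF \<longleftrightarrow> finite (fst AF) \<and> snd AF \<subseteq> fst AF \<times> fst AF"

definition conflict_free :: "'a af \<Rightarrow> 'a set \<Rightarrow> bool" where
  "conflict_free AF S \<longleftrightarrow> S \<subseteq> fst AF \<and> (\<forall>a\<in>S. \<forall>b\<in>S. (a, b) \<notin> snd AF)"

definition naive :: "'a af \<Rightarrow> 'a set set" where
  "naive AF = {S. conflict_free AF S \<and> (\<forall>T. conflict_free AF T \<and> S \<subseteq> T \<longrightarrow> T = S)}"

definition normal_expansion :: "'a af \<Rightarrow> 'a af \<Rightarrow> bool" where
  "normal_expansion AF AF' \<longleftrightarrow>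
     fst AF \<subseteq> fst AF' \<and> snd AF \<subseteq> snd AF' \<and>
     (\<forall>(a, b) \<in> snd AF' - snd AF. \<not> (a \<in> fst AF \<and> b \<in> fst AF))"

end

theory Submission
  imports Defs
begin

theorem proposition36:
  fixes AF AF' :: "'a af" and E :: "'a set"
  assumes "is_af AF" and "is_af AF'"
    and "normal_expansion AF AF'"
    and "E \<in> naive AF"
  shows "\<exists>E' \<in> naive AF'. \<not> E' \<subseteq> fst AF \<or> E' = E"
proof -
  obtain AR R where AF: "AF = (AR, R)" by (cases AF)
  obtain AR' R' where AF': "AF' = (AR', R')" by (cases AF')
  have fin: "finite AR'" using assms(2) AF' by (simp add: is_af_def)
  have sub: "AR \<subseteq> AR'" "R \<subseteq> R'" and new: "\<forall>(a, b) \<in> R' - R. \<not> (a \<in> AR \<and> b \<in> AR)"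
    using assms(3) AF AF' by (auto simp: normal_expansion_def)
  have E: "conflict_free AF E" "\<And>T. conflict_free AF T \<Longrightarrow> E \<subseteq> T \<Longrightarrow> T = E"
    using assms(4) by (auto simp: naive_def)
  have ER: "E \<subseteq> AR" and Ecf: "\<forall>a\<in>E. \<forall>b\<in>E. (a, b) \<notin> R" using E(1) AF by (auto simp: conflict_free_def)
  have Ecf': "conflict_free AF' E"
    unfolding conflict_free_def AF' fst_conv snd_conv
  proof (intro conjI ballI)
    show "E \<subseteq> AR'" using ER sub by blast
    fix a b assume ab: "a \<in> E" "b \<in> E"
    show "(a, b) \<notin> R'"
    proof
      assume "(a, b) \<in> R'"
      moreover have "(a, b) \<notin> R" using Ecf ab by blast
      ultimately have "(a, b) \<in> R' - R" by blast
      with new have "\<not> (a \<in> AR \<and> b \<in> AR)" by blast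
      with ab ER show False by blast
    qed
  qed
  let ?A = "{S. conflict_free AF' S}"
  have finA: "finite ?A" using fin
    by (rule finite_subset[rotated, OF finite_Pow_iff[THEN iffD2]]) (auto simp: conflict_free_def AF')
  obtain M where M: "M \<in> ?A" "E \<subseteq> M" "\<forall>b\<in>?A. M \<subseteq> b \<longrightarrow> M = b"
    using finite_has_maximal2[OF finA, of E] Ecf' by auto
  have Mn: "M \<in> naive AF'" using M by (auto simp: naive_def)
  show ?thesis
  proof (cases "M \<subseteq> AR")
    case True
    have "conflict_free AF M" using True M(1) sub
      unfolding conflict_free_def AF AF' using new by auto
    then have "M = E" using E(2) M(2) by blast
    then show ?thesis using Mn by blast
  next
    case False then show ?thesis using Mn AF by auto
  qed
qed

end
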